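(* Let $G=(V,E)$ be a connected graph with at least two vertices and let $v\in\mathrm{core}(G)$. Let $C_1,\ldots,C_k$ be the connected components of $G-N[v]$, and for $1\le i\le k$ let $N_i$ be the set of neighbors of $v$ having at least one neighbor in $C_i$. If $N_i$ induces a clique in $G$ for every $i\in\{1,\ldots,k\}$, then $\gamma(G-v)>\gamma(G)$, i.e. $v\in V^+$.
   Context: All graphs are finite, simple and undirected. $N[v]$ is the closed neighborhood of $v$; $G-X$ denotes the subgraph induced by $V\setminus X$, and $G-v=G-\{v\}$. $\gamma(G)$ is the domination number; a minimum dominating set (mds) is a dominating set of size $\gamma(G)$; $\mathrm{core}(G)$ is the set of vertices in every mds. $V^+=\{v\in V:\gamma(G-v)>\gamma(G)\}$. *)

theory Defs
  imports Main
begin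

definition simple_graph :: "'a set \<Rightarrow> ('a \<Rightarrow> 'a \<Rightarrow> bool) \<Rightarrow> bool" where
  "simple_graph V E \<longleftrightarrow> finite V \<and> (\<forall>x y. E x y \<longrightarrow> x \<in> V \<and> y \<in> V)
     \<and> (\<forall>x y. E x y \<longrightarrow> E y x) \<and> (\<forall>x. \<not> E x x)"

definition induced :: "'a set \<Rightarrow> ('a \<Rightarrow> 'a \<Rightarrow> bool) \<Rightarrow> 'a \<Rightarrow> 'a \<Rightarrow> bool" where
  "induced W E x y \<longleftrightarrow> x \<in> W \<and> y \<in> W \<and> E x y"

definition connected_graph :: "'a set \<Rightarrow> ('a \<Rightarrow> 'a \<Rightarrow> bool) \<Rightarrow> bool" where
  "connected_graph V E \<longleftrightarrow> (\<forall>x\<in>V. \<forall>y\<in>V. (induced V E)\<^sup>*\<^sup>* x y)"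

definition closed_nbhd :: "'a set \<Rightarrow> ('a \<Rightarrow> 'a \<Rightarrow> bool) \<Rightarrow> 'a \<Rightarrow> 'a set" where
  "closed_nbhd V E v = {v} \<union> {u \<in> V. E v u}"

text \<open>D dominates the subgraph induced on W.\<close>
definition dominating :: "'a set \<Rightarrow> ('a \<Rightarrow> 'a \<Rightarrow> bool) \<Rightarrow> 'a set \<Rightarrow> bool" where
  "dominating W E D \<longleftrightarrow> D \<subseteq> W \<and> (\<forall>w\<in>W. w \<in> D \<or> (\<exists>d\<in>D. E w d))"

definition domination_number :: "'a set \<Rightarrow> ('a \<Rightarrow> 'a \<Rightarrow> bool) \<Rightarrow> nat" where
  "domination_number W E = (LEAST n. \<exists>D. dominating W E D \<and> card D = n)"

definition min_dominating :: "'a set \<Rightarrow> ('a \<Rightarrow> 'a \<Rightarrow> bool) \<Rightarrow> 'a set \<Rightarrow> bool" where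
  "min_dominating W E D \<longleftrightarrow> dominating W E D \<and> card D = domination_number W E"

definition core :: "'a set \<Rightarrow> ('a \<Rightarrow> 'a \<Rightarrow> bool) \<Rightarrow> 'a set" where
  "core V E = {v \<in> V. \<forall>D. min_dominating V E D \<longrightarrow> v \<in> D}"

definition components :: "'a set \<Rightarrow> ('a \<Rightarrow> 'a \<Rightarrow> bool) \<Rightarrow> 'a set set" where
  "components W E = {{y \<in> W. (induced W E)\<^sup>*\<^sup>* x y} | x. x \<in> W}"

definition is_clique :: "('a \<Rightarrow> 'a \<Rightarrow> bool) \<Rightarrow> 'a set \<Rightarrow> bool" where
  "is_clique E S \<longleftrightarrow> (\<forall>a\<in>S. \<forall>b\<in>S. a \<noteq> b \<longrightarrow> E a b)"

end

theory Submission
  imports Defs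
begin

lemma ind_sym:
  assumes sym: "\<forall>x y. E x y \<longrightarrow> E y x" and "(induced A E)\<^sup>*\<^sup>* x y"
  shows "(induced A E)\<^sup>*\<^sup>* y x"
  using assms(2)
proof (induction rule: rtranclp_induct)
  case base then show ?case by simp
next
  case (step y z)
  have "induced A E z y" using step(2) sym unfolding induced_def by auto
  then show ?case using step(3) by (rule converse_rtranclp_into_rtranclp)
qed

lemma comp_unique:
  assumes sym: "\<forall>x y. E x y \<longrightarrow> E y x" and C: "C \<in> components A E" and y: "y \<in> C"
  shows "C = {z\<in>A. (induced A E)\<^sup>*\<^sup>* y z}"
proof -
  obtain x where x: "x \<in> A" "C = {z\<in>A. (induced A E)\<^sup>*\<^sup>* x z}"
    using C unfolding components_def by auto
  have xy: "(induced A E)\<^sup>*\<^sup>* x y" and yA: "y \<in> A" using x y by auto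
  have yx: "(induced A E)\<^sup>*\<^sup>* y x" using ind_sym[OF sym xy] .
  show ?thesis using x(2) xy yx by (auto intro: rtranclp_trans)
qed

lemma comp_self:
  assumes "x \<in> A"
  shows "{z\<in>A. (induced A E)\<^sup>*\<^sup>* x z} \<in> components A E" "x \<in> {z\<in>A. (induced A E)\<^sup>*\<^sup>* x z}"
  using assms unfolding components_def by auto

lemma comp_closed:
  assumes C: "C \<in> components A E" and "x \<in> C" "y \<in> A" "E x y"
  shows "y \<in> C"
proof -
  obtain c where c: "C = {z\<in>A. (induced A E)\<^sup>*\<^sup>* c z}"
    using C unfolding components_def by auto
  have "(induced A E)\<^sup>*\<^sup>* c x" "x \<in> A" using assms(2) c by auto
  moreover have "induced A E x y" using assms \<open>x \<in> A\<close> unfolding induced_def by auto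
  ultimately show ?thesis using c assms(3) by (auto intro: rtranclp.rtrancl_into_rtrancl)
qed

lemma comp_sub: "C \<in> components A E \<Longrightarrow> C \<subseteq> A"
  unfolding components_def by auto

theorem lemma3:
  fixes V :: "'a set" and E :: "'a \<Rightarrow> 'a \<Rightarrow> bool" and v :: 'a
  assumes "simple_graph V E"
    and "connected_graph V E"
    and "card V \<ge> 2"
    and "v \<in> core V E"
    and "\<forall>C \<in> components (V - closed_nbhd V E v) E.
           is_clique E {u \<in> V. E v u \<and> (\<exists>c\<in>C. E u c)}"
  shows "domination_number (V - {v}) E > domination_number V E"
proof (rule ccontr)
  assume neg: "\<not> domination_number (V - {v}) E > domination_number V E"
  have fin: "finite V" and sym: "\<forall>x y. E x y \<longrightarrow> E y x"
    and inV: "\<forall>x y. E x y \<longrightarrow> x\<in>V \<and> y\<in>V" and irr: "\<forall>x. \<not> E x x"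
    using assms(1) unfolding simple_graph_def by auto
  define g where "g = domination_number V E"
  have vV: "v \<in> V" and vcore: "\<forall>D. min_dominating V E D \<longrightarrow> v \<in> D"
    using assms(4) unfolding core_def by auto
  have noZ: False if Z: "dominating V E Z" "v \<notin> Z" "card Z \<le> g" for Z
  proof -
    have "g \<le> card Z" unfolding g_def domination_number_def using Z(1) by (intro Least_le) blast
    hence "min_dominating V E Z" using Z unfolding min_dominating_def g_def by simp
    thus False using vcore Z(2) by blast
  qed
  have domV: "dominating V E V" unfolding dominating_def by auto
  have "\<exists>D. dominating V E D \<and> card D = g" unfolding g_def domination_number_def
    by (rule LeastI_ex) (use domV in blast)
  then obtain D where D: "dominating V E D" "card D = g" by blast
  have vD: "v \<in> D" using vcore D unfolding min_dominating_def g_def by auto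
  have domV': "dominating (V-{v}) E (V-{v})" unfolding dominating_def by auto
  have "\<exists>S. dominating (V-{v}) E S \<and> card S = domination_number (V - {v}) E"
    unfolding domination_number_def
    by (rule LeastI_ex) (use domV' in blast)
  then obtain S where S: "dominating (V-{v}) E S" "card S \<le> g"
    using neg unfolding g_def by auto
  have DV: "D \<subseteq> V" using D(1) unfolding dominating_def by auto
  have SV: "S \<subseteq> V - {v}" using S(1) unfolding dominating_def by auto
  have finD: "finite D" using DV fin finite_subset by blast
  have finS: "finite S" using SV fin finite_subset by blast
  have Sdom: "\<And>x. x \<in> V \<Longrightarrow> x \<noteq> v \<Longrightarrow> x \<in> S \<or> (\<exists>d\<in>S. E x d)"
    using S(1) unfolding dominating_def by auto
  have Ddom: "\<And>x. x \<in> V \<Longrightarrow> x \<in> D \<or> (\<exists>d\<in>D. E x d)"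
    using D(1) unfolding dominating_def by auto
  have S_nb: "\<not> E v s" if "s \<in> S" for s
  proof
    assume Evs: "E v s"
    have "dominating V E S" unfolding dominating_def
    proof (intro conjI ballI)
      show "S \<subseteq> V" using SV by auto
      fix x assume "x \<in> V"
      then show "x \<in> S \<or> (\<exists>d\<in>S. E x d)"
        using Sdom Evs \<open>s \<in> S\<close> by (cases "x = v") auto
    qed
    then show False using noZ SV S(2) by auto
  qed
  define A where "A = V - closed_nbhd V E v"
  have A_iff: "\<And>x. x \<in> A \<longleftrightarrow> x \<in> V \<and> x \<noteq> v \<and> \<not> E v x"
    unfolding A_def closed_nbhd_def by auto
  have SA: "S \<subseteq> A" using SV S_nb A_iff by auto
  obtain x0 where x0: "x0 \<in> V" "x0 \<noteq> v"
  proof -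
    have "\<not> V \<subseteq> {v}"
    proof
      assume "V \<subseteq> {v}"
      then have "card V \<le> card {v}" by (intro card_mono) auto
      then show False using assms(3) by simp
    qed
    then show ?thesis using that by auto
  qed
  have "(induced V E)\<^sup>*\<^sup>* v x0" using assms(2) vV x0 unfolding connected_graph_def by auto
  then obtain w where Evw: "E v w"
    using x0(2) by (cases rule: converse_rtranclpE) (auto simp: induced_def)
  define NC where "NC C = {u \<in> V. E v u \<and> (\<exists>c\<in>C. E u c)}" for C
  have cl: "\<And>C. C \<in> components A E \<Longrightarrow> is_clique E (NC C)"
    using assms(5) unfolding A_def NC_def by simp
  have Nin: "\<exists>C\<in>components A E. x \<in> NC C \<and> (\<exists>s\<in>S\<inter>C. E x s)" if xx: "x \<in> V" "E v x" for x
  proof -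
    have "x \<noteq> v" using irr xx by auto
    have "x \<notin> S" using S_nb xx by auto
    then obtain s where s: "s \<in> S" "E x s" using Sdom xx \<open>x \<noteq> v\<close> by blast
    have sA: "s \<in> A" using SA s by auto
    let ?C = "{z\<in>A. (induced A E)\<^sup>*\<^sup>* s z}"
    have C1: "?C \<in> components A E" and C2: "s \<in> ?C" using comp_self[OF sA] by auto
    have "x \<in> NC ?C" unfolding NC_def using xx s C2 by blast
    moreover have "s \<in> S \<inter> ?C" using s C2 by blast
    ultimately show ?thesis using C1 s(2) by blast
  qed
  show False
  proof (cases "\<exists>C\<in>components A E. D \<inter> NC C = {} \<and> card (D\<inter>C) < card (S\<inter>C)")
    case True
    then obtain C where C: "C \<in> components A E" "D \<inter> NC C = {}" "card (D\<inter>C) < card (S\<inter>C)" by blast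
    have CA: "C \<subseteq> A" using comp_sub C(1) by auto
    have "S \<inter> C \<noteq> {}" using C(3) by (metis card.empty less_nat_zero_code)
    then obtain c where c: "c \<in> C" by blast
    have "\<exists>w'. w' \<in> NC C"
    proof (rule ccontr)
      assume nw: "\<nexists>w'. w' \<in> NC C"
      have "y \<in> C" if "(induced V E)\<^sup>*\<^sup>* c y" for y
        using that
      proof (induction rule: rtranclp_induct)
        case base then show ?case using c by simp
      next
        case (step y z)
        have Eyz: "E y z" "z \<in> V" using step(2) unfolding induced_def by auto
        have yA: "y \<in> A" using step(3) CA by auto
        have "z \<noteq> v" using yA Eyz sym A_iff by blast
        moreover have "\<not> E v z"
        proof
          assume "E v z"
          then have "z \<in> NC C" unfolding NC_def using Eyz sym step(3) by blast
          then show False using nw by blast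
        qed
        ultimately have "z \<in> A" using A_iff Eyz by auto
        then show ?case using comp_closed[OF C(1) step(3)] Eyz by auto
      qed
      moreover have "(induced V E)\<^sup>*\<^sup>* c v" using assms(2) vV CA c A_iff
        unfolding connected_graph_def by auto
      ultimately have "v \<in> C" by blast
      then show False using CA A_iff by auto
    qed
    then obtain w' where w': "w' \<in> NC C" by blast
    have w'V: "w' \<in> V" "E v w'" "w' \<noteq> v" using w' irr unfolding NC_def by auto
    define Z where "Z = (S - C) \<union> (D \<inter> C) \<union> {w'}"
    have "dominating V E Z" unfolding dominating_def
    proof (intro conjI ballI)
      show "Z \<subseteq> V" unfolding Z_def using SV DV w'V by auto
      fix x assume xV: "x \<in> V"
      consider "x = v" | "E v x" | "x \<in> A" using A_iff xV by blast
      then show "x \<in> Z \<or> (\<exists>d\<in>Z. E x d)"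
      proof cases
        case 1 then show ?thesis using w'V unfolding Z_def by auto
      next
        case 2
        then obtain C' s where s: "C' \<in> components A E" "x \<in> NC C'" "s \<in> S \<inter> C'" "E x s"
          using Nin xV by blast
        show ?thesis
        proof (cases "s \<in> C")
          case True
          then have "x \<in> NC C" using s unfolding NC_def by auto
          then have "x = w' \<or> E x w'" using cl[OF C(1)] w' unfolding is_clique_def by auto
          then show ?thesis unfolding Z_def by auto
        next
          case False then show ?thesis using s unfolding Z_def by auto
        qed
      next
        case 3
        show ?thesis
        proof (cases "x \<in> C")
          case True
          have "x \<in> D \<or> (\<exists>d\<in>D. E x d)" using Ddom xV .
          then show ?thesis
          proof
            assume "x \<in> D" then show ?thesis using True unfolding Z_def by auto
          next
            assume "\<exists>d\<in>D. E x d"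
            then obtain d where d: "d \<in> D" "E x d" by blast
            have dV: "d \<in> V" using d inV by auto
            have "d \<noteq> v" using 3 d sym A_iff by blast
            moreover have "\<not> E v d"
            proof
              assume "E v d"
              then have "d \<in> NC C" unfolding NC_def using dV d sym True by blast
              then show False using C(2) d by blast
            qed
            ultimately have "d \<in> A" using A_iff dV by auto
            then have "d \<in> C" using comp_closed[OF C(1) True] d by auto
            then show ?thesis using d unfolding Z_def by auto
          qed
        next
          case False
          have "x \<in> S \<or> (\<exists>d\<in>S. E x d)" using Sdom xV 3 A_iff by auto
          then show ?thesis
          proof
            assume "x \<in> S" then show ?thesis using False unfolding Z_def by auto
          next
            assume "\<exists>d\<in>S. E x d"
            then obtain d where d: "d \<in> S" "E x d" by blast
            have "d \<notin> C"
            proof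
              assume "d \<in> C"
              then have "x \<in> C" using comp_closed[OF C(1) _ 3] d sym by blast
              then show False using False by simp
            qed
            then show ?thesis using d unfolding Z_def by auto
          qed
        qed
      qed
    qed
    moreover have "v \<notin> Z" unfolding Z_def using SV CA A_iff w'V by auto
    moreover have "card Z \<le> g"
    proof -
      have "card Z \<le> card (S - C) + card (D \<inter> C) + card {w'}"
        unfolding Z_def by (meson card_Un_le add_le_mono le_refl order_trans)
      also have "\<dots> < card (S - C) + card (S \<inter> C) + 1" using C(3) by simp
      also have "\<dots> = card S + 1" using card_Int_Diff[OF finS, of C] by simp
      finally show ?thesis using S(2) by simp
    qed
    ultimately show False using noZ by blast
  next
    case False
    define J where "J = {C\<in>components A E. D \<inter> NC C = {}}"
    define U where "U = \<Union>J"
    have UA: "U \<subseteq> A" unfolding U_def J_def using comp_sub by blast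
    have Jle: "\<And>C. C \<in> J \<Longrightarrow> card (S\<inter>C) \<le> card (D\<inter>C)" using False unfolding J_def by auto
    have finA: "finite A" using fin unfolding A_def by auto
    have finJ: "finite J"
    proof -
      have "J \<subseteq> Pow A" unfolding J_def using comp_sub by blast
      then show ?thesis using finA by (meson finite_Pow_iff finite_subset)
    qed
    have disj: "\<forall>C\<in>J. \<forall>C'\<in>J. C \<noteq> C' \<longrightarrow> X \<inter> C \<inter> (X \<inter> C') = {}" for X
    proof (intro ballI impI)
      fix C C' assume "C \<in> J" "C' \<in> J" "C \<noteq> C'"
      then have c: "C \<in> components A E" "C' \<in> components A E" unfolding J_def by auto
      show "X \<inter> C \<inter> (X \<inter> C') = {}"
      proof (rule ccontr)
        assume "X \<inter> C \<inter> (X \<inter> C') \<noteq> {}"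
        then obtain y where "y \<in> C" "y \<in> C'" by blast
        then have "C = C'" using comp_unique[OF sym c(1)] comp_unique[OF sym c(2)] by metis
        then show False using \<open>C \<noteq> C'\<close> by simp
      qed
    qed
    have cardU: "card (X \<inter> U) = (\<Sum>C\<in>J. card (X \<inter> C))" if "finite X" for X
    proof -
      have "X \<inter> U = \<Union>((\<lambda>C. X \<inter> C) ` J)" unfolding U_def by auto
      moreover have "card (\<Union>((\<lambda>C. X \<inter> C) ` J)) = (\<Sum>C\<in>J. card (X \<inter> C))"
        by (rule card_UN_disjoint) (use finJ that disj in auto)
      ultimately show ?thesis by simp
    qed
    have SU: "card (S \<inter> U) \<le> card (D \<inter> U)"
    proof -
      have "(\<Sum>C\<in>J. card (S \<inter> C)) \<le> (\<Sum>C\<in>J. card (D \<inter> C))"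
        by (rule sum_mono) (rule Jle)
      then show ?thesis unfolding cardU[OF finS] cardU[OF finD] .
    qed
    have inU: "x \<in> U \<longleftrightarrow> (\<exists>C\<in>components A E. x \<in> C \<and> C \<in> J)" for x
      unfolding U_def J_def by auto
    have compx: "{z\<in>A. (induced A E)\<^sup>*\<^sup>* x z} \<in> J" if "x \<in> U" for x
    proof -
      obtain C where C: "C \<in> components A E" "x \<in> C" "C \<in> J" using inU \<open>x \<in> U\<close> by blast
      then show ?thesis using comp_unique[OF sym C(1) C(2)] by simp
    qed
    define Z where "Z = (S \<inter> U) \<union> (D - {v} - U) \<union> {w}"
    have wV: "w \<in> V" "w \<noteq> v" using Evw inV irr by auto
    have "dominating V E Z" unfolding dominating_def
    proof (intro conjI ballI)
      show "Z \<subseteq> V" unfolding Z_def using SV DV wV by auto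
      fix x assume xV: "x \<in> V"
      consider "x = v" | "E v x" | "x \<in> A" using A_iff xV by blast
      then show "x \<in> Z \<or> (\<exists>d\<in>Z. E x d)"
      proof cases
        case 1 then show ?thesis using Evw unfolding Z_def by auto
      next
        case 2
        then obtain C s where s: "C \<in> components A E" "x \<in> NC C" "s \<in> S \<inter> C" "E x s"
          using Nin xV by blast
        show ?thesis
        proof (cases "C \<in> J")
          case True
          then have "s \<in> U" using s unfolding U_def by auto
          then show ?thesis using s unfolding Z_def by auto
        next
          case False
          then obtain m where m: "m \<in> D" "m \<in> NC C" using s(1) unfolding J_def by auto
          have mA: "m \<notin> A" "m \<noteq> v" using m A_iff irr unfolding NC_def by auto
          then have "m \<in> Z" using m UA unfolding Z_def by auto
          moreover have "x = m \<or> E x m" using cl[OF s(1)] m s(2) unfolding is_clique_def by auto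
          ultimately show ?thesis by auto
        qed
      next
        case 3
        let ?C = "{z\<in>A. (induced A E)\<^sup>*\<^sup>* x z}"
        have Cx: "?C \<in> components A E" "x \<in> ?C" using comp_self[OF 3] by auto
        show ?thesis
        proof (cases "?C \<in> J")
          case True
          have "x \<in> S \<or> (\<exists>d\<in>S. E x d)" using Sdom xV 3 A_iff by auto
          then show ?thesis
          proof
            assume "x \<in> S" then show ?thesis using True Cx unfolding Z_def U_def by auto
          next
            assume "\<exists>d\<in>S. E x d"
            then obtain d where d: "d \<in> S" "E x d" by blast
            have "d \<in> ?C" using comp_closed[OF Cx] d SA by auto
            then show ?thesis using d True unfolding Z_def U_def by auto
          qed
        next
          case False
          have xU: "x \<notin> U" using compx False by auto
          have "x \<in> D \<or> (\<exists>d\<in>D. E x d)" using Ddom xV .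
          then show ?thesis
          proof
            assume "x \<in> D" then show ?thesis using xU 3 A_iff unfolding Z_def by auto
          next
            assume "\<exists>d\<in>D. E x d"
            then obtain d where d: "d \<in> D" "E x d" by blast
            have dv: "d \<noteq> v" using 3 d sym A_iff by blast
            have "d \<notin> U"
            proof
              assume dU: "d \<in> U"
              then have dA: "d \<in> A" using UA by auto
              have "d \<in> ?C" using comp_closed[OF Cx] d dA by auto
              then have "{z\<in>A. (induced A E)\<^sup>*\<^sup>* d z} = ?C"
                using comp_unique[OF sym Cx(1)] by metis
              then show False using compx[OF dU] False by simp
            qed
            then show ?thesis using d dv unfolding Z_def by auto
          qed
        qed
      qed
    qed
    moreover have "v \<notin> Z" unfolding Z_def using wV SV by auto
    moreover have "card Z \<le> g"
    proof -
      have "card Z \<le> card (S \<inter> U) + card (D - {v} - U) + card {w}"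
        unfolding Z_def by (meson card_Un_le add_le_mono le_refl order_trans)
      also have "\<dots> \<le> card (D \<inter> U) + card (D - {v} - U) + 1" using SU by simp
      also have "card (D - {v} - U) = card (D - U) - 1"
      proof -
        have "D - {v} - U = (D - U) - {v}" by auto
        moreover have "v \<in> D - U" using vD UA A_iff by auto
        ultimately show ?thesis using finD by simp
      qed
      also have "card (D \<inter> U) + (card (D - U) - 1) + 1 = card D"
      proof -
        have "v \<in> D - U" using vD UA A_iff by auto
        then have "card (D - U) \<ge> 1" using finD by (metis One_nat_def Suc_leI card_gt_0_iff empty_iff finite_Diff)
        then show ?thesis using card_Int_Diff[OF finD, of U] by simp
      qed
      finally show ?thesis using D(2) by simp
    qed
    ultimately show False using noZ by blast
  qed
qed

end
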